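(* Let $D$ be a division ring and $R$ a maximal subring of $D$ which is a left duo ring. Then $R$ is a duo ring, and either $R$ is a division ring or $R$ is an Ore $G$-domain with exactly one nonzero prime ideal, namely $M=R\setminus U(R)$. Moreover, if $R$ is not a division ring, then $R$ is a valuation ring for $D$ (for each $x\in D^*$, $x\in R$ or $x^{-1}\in R$), $Max_l(R)=Max_r(R)=Max(R)=Spec(R)\setminus\{0\}=\{M\}$, and $dRd^{-1}=R$ and $dMd^{-1}=M$ for every $d\in D^*$.
   Context: All rings are associative unital and subrings share the identity. A maximal subring of a ring $T$ is a proper subring maximal under inclusion among proper subrings of $T$. A ring is left (right) duo if every left (right) ideal is two-sided; duo means both. $U(R)$ is the unit group, $D^*=D\setminus\{0\}$; $Max_l(R)$, $Max_r(R)$, $Max(R)$, $Spec(R)$ denote the sets of maximal left ideals, maximal right ideals, maximal ideals, and prime ideals. A $G$-domain is a domain in which the intersection of all nonzero prime ideals is nonzero. *)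

theory Defs
  imports Main
begin

text \<open>All notions are relative to a subset R of a ring whose carrier is the whole type
  (here: a division ring D, given as the type 'a :: division_ring).\<close>

definition subring :: "'a::ring_1 set \<Rightarrow> bool" where
  "subring R \<longleftrightarrow> 1 \<in> R \<and> (\<forall>x\<in>R. \<forall>y\<in>R. x - y \<in> R \<and> x * y \<in> R)"

definition maximal_subring :: "'a::ring_1 set \<Rightarrow> bool" where
  "maximal_subring R \<longleftrightarrow> subring R \<and> R \<noteq> UNIV \<and>
     (\<forall>S. subring S \<and> R \<subseteq> S \<and> S \<noteq> UNIV \<longrightarrow> S = R)"

definition left_ideal_of :: "'a::ring_1 set \<Rightarrow> 'a set \<Rightarrow> bool" where
  "left_ideal_of R I \<longleftrightarrow> I \<subseteq> R \<and> 0 \<in> I \<and> (\<forall>x\<in>I. \<forall>y\<in>I. x - y \<in> I) \<and>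
     (\<forall>r\<in>R. \<forall>x\<in>I. r * x \<in> I)"

definition right_ideal_of :: "'a::ring_1 set \<Rightarrow> 'a set \<Rightarrow> bool" where
  "right_ideal_of R I \<longleftrightarrow> I \<subseteq> R \<and> 0 \<in> I \<and> (\<forall>x\<in>I. \<forall>y\<in>I. x - y \<in> I) \<and>
     (\<forall>r\<in>R. \<forall>x\<in>I. x * r \<in> I)"

definition ideal_of :: "'a::ring_1 set \<Rightarrow> 'a set \<Rightarrow> bool" where
  "ideal_of R I \<longleftrightarrow> left_ideal_of R I \<and> right_ideal_of R I"

definition left_duo :: "'a::ring_1 set \<Rightarrow> bool" where
  "left_duo R \<longleftrightarrow> (\<forall>I. left_ideal_of R I \<longrightarrow> ideal_of R I)"

definition right_duo :: "'a::ring_1 set \<Rightarrow> bool" where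
  "right_duo R \<longleftrightarrow> (\<forall>I. right_ideal_of R I \<longrightarrow> ideal_of R I)"

definition duo :: "'a::ring_1 set \<Rightarrow> bool" where
  "duo R \<longleftrightarrow> left_duo R \<and> right_duo R"

definition units_of_sub :: "'a::ring_1 set \<Rightarrow> 'a set" where
  "units_of_sub R = {x \<in> R. \<exists>y\<in>R. x * y = 1 \<and> y * x = 1}"

definition is_division_subring :: "'a::division_ring set \<Rightarrow> bool" where
  "is_division_subring R \<longleftrightarrow> subring R \<and> (\<forall>x\<in>R. x \<noteq> 0 \<longrightarrow> inverse x \<in> R)"

definition domain_sub :: "'a::ring_1 set \<Rightarrow> bool" where
  "domain_sub R \<longleftrightarrow> subring R \<and> (1::'a) \<noteq> 0 \<and>
     (\<forall>a\<in>R. \<forall>b\<in>R. a * b = 0 \<longrightarrow> a = 0 \<or> b = 0)"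

definition prime_ideal_of :: "'a::ring_1 set \<Rightarrow> 'a set \<Rightarrow> bool" where
  "prime_ideal_of R P \<longleftrightarrow> ideal_of R P \<and> P \<noteq> R \<and>
     (\<forall>a\<in>R. \<forall>b\<in>R. (\<forall>r\<in>R. a * r * b \<in> P) \<longrightarrow> a \<in> P \<or> b \<in> P)"

definition Spec_sub :: "'a::ring_1 set \<Rightarrow> 'a set set" where
  "Spec_sub R = {P. prime_ideal_of R P}"

definition Max_l :: "'a::ring_1 set \<Rightarrow> 'a set set" where
  "Max_l R = {I. left_ideal_of R I \<and> I \<noteq> R \<and>
     (\<forall>J. left_ideal_of R J \<and> J \<noteq> R \<and> I \<subseteq> J \<longrightarrow> J = I)}"

definition Max_r :: "'a::ring_1 set \<Rightarrow> 'a set set" where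
  "Max_r R = {I. right_ideal_of R I \<and> I \<noteq> R \<and>
     (\<forall>J. right_ideal_of R J \<and> J \<noteq> R \<and> I \<subseteq> J \<longrightarrow> J = I)}"

definition Max_two :: "'a::ring_1 set \<Rightarrow> 'a set set" where
  "Max_two R = {I. ideal_of R I \<and> I \<noteq> R \<and>
     (\<forall>J. ideal_of R J \<and> J \<noteq> R \<and> I \<subseteq> J \<longrightarrow> J = I)}"

definition G_domain :: "'a::ring_1 set \<Rightarrow> bool" where
  "G_domain R \<longleftrightarrow> domain_sub R \<and>
     R \<inter> \<Inter>{P. prime_ideal_of R P \<and> P \<noteq> {0}} \<noteq> {0}"

definition left_Ore :: "'a::ring_1 set \<Rightarrow> bool" where
  "left_Ore R \<longleftrightarrow> (\<forall>a\<in>R. \<forall>b\<in>R. a \<noteq> 0 \<and> b \<noteq> 0 \<longrightarrow>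
     (\<exists>r\<in>R. \<exists>s\<in>R. r * a = s * b \<and> r * a \<noteq> 0))"

definition right_Ore :: "'a::ring_1 set \<Rightarrow> bool" where
  "right_Ore R \<longleftrightarrow> (\<forall>a\<in>R. \<forall>b\<in>R. a \<noteq> 0 \<and> b \<noteq> 0 \<longrightarrow>
     (\<exists>r\<in>R. \<exists>s\<in>R. a * r = b * s \<and> a * r \<noteq> 0))"

definition Ore_domain :: "'a::ring_1 set \<Rightarrow> bool" where
  "Ore_domain R \<longleftrightarrow> domain_sub R \<and> left_Ore R \<and> right_Ore R"

definition valuation_ring_for :: "'a::division_ring set \<Rightarrow> bool" where
  "valuation_ring_for R \<longleftrightarrow> (\<forall>x. x \<noteq> 0 \<longrightarrow> x \<in> R \<or> inverse x \<in> R)"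

end

theory Submission
  imports Defs
begin

lemma sub_one: "subring R \<Longrightarrow> 1 \<in> R" by (simp add: subring_def)
lemma sub_diff: "subring R \<Longrightarrow> x \<in> R \<Longrightarrow> y \<in> R \<Longrightarrow> x - y \<in> R" by (simp add: subring_def)
lemma sub_mult: "subring R \<Longrightarrow> x \<in> R \<Longrightarrow> y \<in> R \<Longrightarrow> x * y \<in> R" by (simp add: subring_def)
lemma sub_zero: "subring R \<Longrightarrow> 0 \<in> R" by (metis sub_one sub_diff diff_self)
lemma sub_uminus: "subring R \<Longrightarrow> x \<in> R \<Longrightarrow> - x \<in> R" by (metis sub_zero sub_diff diff_0)
lemma sub_add: "subring R \<Longrightarrow> x \<in> R \<Longrightarrow> y \<in> R \<Longrightarrow> x + y \<in> R"
  by (metis sub_uminus sub_diff diff_minus_eq_add)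
lemma sub_pow: "subring R \<Longrightarrow> x \<in> R \<Longrightarrow> x ^ n \<in> R"
  by (induction n) (auto simp: sub_one sub_mult)

lemma units_eq:
  fixes R :: "'a::division_ring set"
  shows "units_of_sub R = {x\<in>R. x \<noteq> 0 \<and> inverse x \<in> R}"
  unfolding units_of_sub_def
proof (intro set_eqI iffI)
  fix x assume "x \<in> {x \<in> R. \<exists>y\<in>R. x * y = 1 \<and> y * x = 1}"
  then obtain y where "x \<in> R" "y \<in> R" "x * y = 1" by blast
  moreover have "x \<noteq> 0" using \<open>x * y = 1\<close> by auto
  moreover have "inverse x = y" using \<open>x * y = 1\<close> by (rule inverse_unique)
  ultimately show "x \<in> {x \<in> R. x \<noteq> 0 \<and> inverse x \<in> R}" by auto
next
  fix x assume "x \<in> {x \<in> R. x \<noteq> 0 \<and> inverse x \<in> R}"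
  then show "x \<in> {x \<in> R. \<exists>y\<in>R. x * y = 1 \<and> y * x = 1}"
    by (auto intro!: bexI[of _ "inverse x"])
qed

lemma max_sub: "maximal_subring R \<Longrightarrow> subring S \<Longrightarrow> R \<subseteq> S \<Longrightarrow> S \<noteq> R \<Longrightarrow> S = UNIV"
  unfolding maximal_subring_def by blast

lemma ld_comm:
  fixes R :: "'a::ring_1 set"
  assumes sub: "subring R" and ld: "left_duo R" and a: "a \<in> R" and z: "z \<in> R"
  shows "\<exists>z'\<in>R. a * z = z' * a"
proof -
  let ?I = "{r * a | r. r \<in> R}"
  have "left_ideal_of R ?I" unfolding left_ideal_of_def
  proof (intro conjI ballI)
    show "?I \<subseteq> R" using sub a sub_mult by blast
    show "0 \<in> ?I" using sub_zero[OF sub] by (auto intro!: exI[of _ 0])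
  next
    fix x y assume "x \<in> ?I" "y \<in> ?I"
    then obtain r s where "r \<in> R" "s \<in> R" "x = r * a" "y = s * a" by blast
    then show "x - y \<in> ?I" using sub_diff[OF sub] by (auto simp: left_diff_distrib intro!: exI[of _ "r - s"])
  next
    fix t x assume "t \<in> R" "x \<in> ?I"
    then obtain r where "r \<in> R" "x = r * a" by blast
    then show "t * x \<in> ?I" using sub_mult[OF sub \<open>t \<in> R\<close>] by (auto simp: mult.assoc intro!: exI[of _ "t * r"])
  qed
  then have "right_ideal_of R ?I" using ld unfolding left_duo_def ideal_of_def by blast
  moreover have "a \<in> ?I" using sub_one[OF sub] by (auto intro!: exI[of _ 1])
  ultimately have "a * z \<in> ?I" using z unfolding right_ideal_of_def by blast
  then show ?thesis by blast
qed

lemma comm_pow: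
  fixes x :: "'a::ring_1"
  assumes "\<forall>t\<in>R. \<exists>t'\<in>R. x * t = t' * x"
  shows "\<forall>t\<in>R. \<exists>t'\<in>R. x ^ i * t = t' * x ^ i"
proof (induction i)
  case 0 then show ?case by auto
next
  case (Suc i)
  show ?case
  proof
    fix t assume "t \<in> R"
    then obtain t1 where t1: "t1 \<in> R" "x ^ i * t = t1 * x ^ i" using Suc by blast
    then obtain t2 where t2: "t2 \<in> R" "x * t1 = t2 * x" using assms by blast
    have "x ^ Suc i * t = x * (x ^ i * t)" by (simp add: mult.assoc)
    also have "\<dots> = (x * t1) * x ^ i" using t1 by (simp add: mult.assoc)
    also have "\<dots> = t2 * x ^ Suc i" using t2 by (simp add: mult.assoc)
    finally show "\<exists>t'\<in>R. x ^ Suc i * t = t' * x ^ Suc i" using t2 by blast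
  qed
qed


lemma loc_univ:
  fixes R :: "'a::division_ring set"
  assumes max: "maximal_subring R" and ld: "left_duo R"
    and a: "a \<in> R" "a \<noteq> 0" "inverse a \<notin> R"
  shows "\<exists>n. a ^ n * d \<in> R"
proof -
  have sub: "subring R" using max by (simp add: maximal_subring_def)
  have cm: "\<forall>t\<in>R. \<exists>t'\<in>R. a ^ i * t = t' * a ^ i" for i
    by (rule comm_pow) (use ld_comm[OF sub ld a(1)] in blast)
  let ?S = "{x. \<exists>n. a ^ n * x \<in> R}"
  have "subring ?S" unfolding subring_def
  proof (intro conjI ballI)
    show "1 \<in> ?S" using sub_one[OF sub] by (auto intro!: exI[of _ 0])
  next
    fix x y assume "x \<in> ?S" "y \<in> ?S"
    then obtain n m where n: "a ^ n * x \<in> R" and m: "a ^ m * y \<in> R" by blast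
    have e1: "a ^ (n + m) * x = a ^ m * (a ^ n * x)"
      by (metis add.commute power_add mult.assoc)
    have e2: "a ^ (n + m) * y = a ^ n * (a ^ m * y)"
      by (metis power_add mult.assoc)
    have "a ^ (n + m) * (x - y) = a ^ m * (a ^ n * x) - a ^ n * (a ^ m * y)"
      by (simp add: right_diff_distrib e1 e2)
    then have "a ^ (n + m) * (x - y) \<in> R"
      using sub_diff[OF sub] sub_mult[OF sub] sub_pow[OF sub a(1)] n m by metis
    then show "x - y \<in> ?S" by blast
    obtain z' where z': "z' \<in> R" "a ^ m * (a ^ n * x) = z' * a ^ m" using cm n by blast
    have "a ^ (n + m) * (x * y) = z' * (a ^ m * y)"
      using e1 z' by (metis mult.assoc)
    then have "a ^ (n + m) * (x * y) \<in> R" using sub_mult[OF sub] z' m by metis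
    then show "x * y \<in> ?S" by blast
  qed
  moreover have "R \<subseteq> ?S" by (auto intro!: exI[of _ 0])
  moreover have "inverse a \<in> ?S" using a sub_one[OF sub] by (auto intro!: exI[of _ 1])
  ultimately have "?S = UNIV" using max_sub[OF max] a(3) by blast
  then show ?thesis by blast
qed

lemma conj_in:
  fixes R :: "'a::division_ring set"
  assumes max: "maximal_subring R" and ld: "left_duo R"
    and a: "a \<in> R" "a \<noteq> 0" "inverse a \<notin> R"
    and d: "d \<noteq> 0" and t: "t \<in> R"
  shows "d * t * inverse d \<in> R"
proof -
  have sub: "subring R" using max by (simp add: maximal_subring_def)
  obtain n where n: "a ^ n * d \<in> R" using loc_univ[OF max ld a] by blast
  let ?I = "{r\<in>R. r * d \<in> R}"
  have liI: "left_ideal_of R ?I" unfolding left_ideal_of_def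
  proof (intro conjI ballI)
    show "?I \<subseteq> R" by blast
    show "0 \<in> ?I" using sub_zero[OF sub] by auto
  next
    fix x y assume "x \<in> ?I" "y \<in> ?I"
    then show "x - y \<in> ?I" using sub_diff[OF sub] by (auto simp: left_diff_distrib)
  next
    fix r x assume "r \<in> R" "x \<in> ?I"
    then show "r * x \<in> ?I" using sub_mult[OF sub] by (auto simp: mult.assoc)
  qed
  then have riI: "right_ideal_of R ?I" using ld unfolding left_duo_def ideal_of_def by blast
  let ?Id = "{r * d | r. r \<in> ?I}"
  have "left_ideal_of R ?Id" unfolding left_ideal_of_def
  proof (intro conjI ballI)
    show "?Id \<subseteq> R" by blast
    show "0 \<in> ?Id" using sub_zero[OF sub] by (auto intro!: exI[of _ 0])
  next
    fix x y assume "x \<in> ?Id" "y \<in> ?Id"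
    then obtain r s where "r \<in> ?I" "s \<in> ?I" "x = r * d" "y = s * d" by blast
    moreover have "r - s \<in> ?I" using liI \<open>r \<in> ?I\<close> \<open>s \<in> ?I\<close> unfolding left_ideal_of_def by blast
    ultimately show "x - y \<in> ?Id" by (auto simp: left_diff_distrib intro!: exI[of _ "r - s"])
  next
    fix u x assume "u \<in> R" "x \<in> ?Id"
    then obtain r where "r \<in> ?I" "x = r * d" by blast
    moreover have "u * r \<in> ?I" using liI \<open>r \<in> ?I\<close> \<open>u \<in> R\<close> unfolding left_ideal_of_def by blast
    ultimately show "u * x \<in> ?Id" by (auto simp: mult.assoc intro!: exI[of _ "u * r"])
  qed
  then have riId: "right_ideal_of R ?Id" using ld unfolding left_duo_def ideal_of_def by blast
  let ?J = "{x. \<forall>r\<in>?I. r * x \<in> ?I}"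
  have "subring ?J" unfolding subring_def
  proof (intro conjI ballI)
    show "1 \<in> ?J" by simp
  next
    fix x y assume x: "x \<in> ?J" and y: "y \<in> ?J"
    show "x - y \<in> ?J"
    proof (rule CollectI, rule ballI)
      fix r assume "r \<in> ?I"
      then have "r * x \<in> ?I" "r * y \<in> ?I" using x y by blast+
      then have "r * x - r * y \<in> ?I" using liI unfolding left_ideal_of_def by blast
      then show "r * (x - y) \<in> ?I" by (simp add: right_diff_distrib)
    qed
    show "x * y \<in> ?J"
    proof (rule CollectI, rule ballI)
      fix r assume "r \<in> ?I"
      then have "r * x \<in> ?I" using x by blast
      then have "r * x * y \<in> ?I" using y by blast
      then show "r * (x * y) \<in> ?I" by (simp add: mult.assoc)
    qed
  qed
  moreover have "R \<subseteq> ?J" using riI unfolding right_ideal_of_def by blast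
  moreover have "?J \<noteq> UNIV"
  proof
    assume J: "?J = UNIV"
    obtain b where b: "b \<notin> R" using max unfolding maximal_subring_def by blast
    have an: "a ^ n \<in> ?I" using n sub_pow[OF sub a(1)] by blast
    have "a ^ n \<noteq> 0" using a(2) by simp
    then have "a ^ n * (inverse (a ^ n) * b) = b" by (simp add: mult.assoc[symmetric])
    moreover have "a ^ n * (inverse (a ^ n) * b) \<in> ?I" using J an by blast
    ultimately show False using b by auto
  qed
  ultimately have JR: "?J = R" using max unfolding maximal_subring_def by blast
  have "d * t * inverse d \<in> ?J"
  proof (rule CollectI, rule ballI)
    fix r assume r: "r \<in> ?I"
    then have "r * d \<in> ?Id" by blast
    then have "r * d * t \<in> ?Id" using riId t unfolding right_ideal_of_def by blast
    then obtain r' where r': "r' \<in> ?I" "r * d * t = r' * d" by blast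
    have "r * (d * t * inverse d) = r' * d * inverse d" using r'(2) by (metis mult.assoc)
    also have "\<dots> = r'" using d by (simp add: mult.assoc)
    finally show "r * (d * t * inverse d) \<in> ?I" using r' by simp
  qed
  then show ?thesis using JR by blast
qed


definition nonunits :: "'a::division_ring set \<Rightarrow> 'a set" where
  "nonunits R = {x\<in>R. x = 0 \<or> inverse x \<notin> R}"

lemma nu_multL:
  fixes R :: "'a::division_ring set"
  assumes sub: "subring R" and r: "r \<in> R" and x: "x \<in> nonunits R"
  shows "r * x \<in> nonunits R"
proof -
  have "r * x \<in> R" using sub_mult[OF sub r] x by (simp add: nonunits_def)
  moreover have "r * x = 0 \<or> inverse (r * x) \<notin> R"
  proof (rule ccontr)
    assume "\<not> ?thesis"
    then have ne: "r * x \<noteq> 0" and i: "inverse (r * x) \<in> R" by auto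
    then have "r \<noteq> 0" "x \<noteq> 0" by auto
    then have "inverse (r * x) * r = inverse x * (inverse r * r)"
      by (simp add: nonzero_inverse_mult_distrib mult.assoc del: left_inverse)
    also have "\<dots> = inverse x" using \<open>r \<noteq> 0\<close> by simp
    finally have "inverse (r * x) * r = inverse x" .
    then have "inverse x \<in> R" using sub_mult[OF sub i r] by simp
    then show False using x \<open>x \<noteq> 0\<close> by (simp add: nonunits_def)
  qed
  ultimately show ?thesis by (simp add: nonunits_def)
qed

lemma nu_multR:
  fixes R :: "'a::division_ring set"
  assumes sub: "subring R" and r: "r \<in> R" and x: "x \<in> nonunits R"
  shows "x * r \<in> nonunits R"
proof -
  have "x * r \<in> R" using sub_mult[OF sub _ r] x by (simp add: nonunits_def)
  moreover have "x * r = 0 \<or> inverse (x * r) \<notin> R"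
  proof (rule ccontr)
    assume "\<not> ?thesis"
    then have ne: "x * r \<noteq> 0" and i: "inverse (x * r) \<in> R" by auto
    then have "r \<noteq> 0" "x \<noteq> 0" by auto
    then have "r * inverse (x * r) = (r * inverse r) * inverse x"
      by (simp add: nonzero_inverse_mult_distrib mult.assoc del: right_inverse)
    also have "\<dots> = inverse x" using \<open>r \<noteq> 0\<close> by simp
    finally have "r * inverse (x * r) = inverse x" .
    then have "inverse x \<in> R" using sub_mult[OF sub r i] by simp
    then show False using x \<open>x \<noteq> 0\<close> by (simp add: nonunits_def)
  qed
  ultimately show ?thesis by (simp add: nonunits_def)
qed

lemma one_minus_pow:
  fixes y :: "'a::ring_1"
  assumes sub: "subring R" and y: "y \<in> R"
  shows "\<exists>q\<in>R. (1 - y) ^ n = 1 - q * y"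
proof (induction n)
  case 0 then show ?case using sub_zero[OF sub] by (auto intro!: bexI[of _ 0])
next
  case (Suc n)
  then obtain q where q: "q \<in> R" "(1 - y) ^ n = 1 - q * y" by blast
  have "(1 - y) ^ Suc n = (1 - y) * (1 - q * y)" using q(2) by (simp only: power_Suc)
  also have "\<dots> = 1 - (q + 1 - y * q) * y" by (simp add: algebra_simps)
  finally have eq: "(1 - y) ^ Suc n = 1 - (q + 1 - y * q) * y" .
  have "q + 1 - y * q \<in> R"
    using sub_add[OF sub q(1) sub_one[OF sub]] sub_mult[OF sub y q(1)] sub_diff[OF sub] by blast
  then show ?case using eq by blast
qed

lemma nu_add:
  fixes R :: "'a::division_ring set"
  assumes max: "maximal_subring R" and ld: "left_duo R"
    and x: "x \<in> nonunits R" and y: "y \<in> nonunits R"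
  shows "x + y \<in> nonunits R"
proof (rule ccontr)
  assume nxy: "x + y \<notin> nonunits R"
  have sub: "subring R" using max by (simp add: maximal_subring_def)
  have xyR: "x + y \<in> R" using sub_add[OF sub] x y by (simp add: nonunits_def)
  then have u0: "x + y \<noteq> 0" and ui: "inverse (x + y) \<in> R" using nxy by (auto simp: nonunits_def)
  define x' where "x' = inverse (x + y) * x"
  define y' where "y' = inverse (x + y) * y"
  have x'n: "x' \<in> nonunits R" unfolding x'_def by (rule nu_multL[OF sub ui x])
  have y'n: "y' \<in> nonunits R" unfolding y'_def by (rule nu_multL[OF sub ui y])
  have s1: "x' + y' = 1" unfolding x'_def y'_def using u0
    by (simp add: distrib_left[symmetric])
  have one_nu: "1 \<notin> nonunits R" by (simp add: nonunits_def)
  have x'0: "x' \<noteq> 0" using s1 y'n one_nu by auto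
  have y'0: "y' \<noteq> 0" using s1 x'n one_nu by auto
  have x'R: "x' \<in> R" "inverse x' \<notin> R" using x'n x'0 by (auto simp: nonunits_def)
  have y'R: "y' \<in> R" "inverse y' \<notin> R" using y'n y'0 by (auto simp: nonunits_def)
  obtain n where n: "x' ^ n * inverse y' \<in> R" using loc_univ[OF max ld x'R(1) x'0 x'R(2)] by blast
  obtain q where q: "q \<in> R" "(1 - y') ^ n = 1 - q * y'" using one_minus_pow[OF sub y'R(1)] by blast
  have x'eq: "x' = 1 - y'" using s1 by (simp add: algebra_simps)
  have "(x' ^ n * inverse y') * y' = x' ^ n" using y'0 by (simp add: mult.assoc)
  then have "(x' ^ n * inverse y') * y' = 1 - q * y'" using q x'eq by simp
  then have "(x' ^ n * inverse y' + q) * y' = 1" by (simp add: algebra_simps)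
  then have "inverse (x' ^ n * inverse y' + q) = y'" by (rule inverse_unique)
  then have "inverse y' = x' ^ n * inverse y' + q" by (metis inverse_inverse_eq)
  then have "inverse y' \<in> R" using sub_add[OF sub n q(1)] by simp
  then show False using y'R by simp
qed

lemma nu_uminus:
  fixes R :: "'a::division_ring set"
  assumes sub: "subring R" and x: "x \<in> nonunits R"
  shows "- x \<in> nonunits R"
  using x sub_uminus[OF sub] by (auto simp: nonunits_def) (metis inverse_minus_eq minus_minus sub_uminus[OF sub])

lemma nu_conj:
  fixes R :: "'a::division_ring set"
  assumes max: "maximal_subring R" and ld: "left_duo R"
    and a: "a \<in> R" "a \<noteq> 0" "inverse a \<notin> R"
    and d: "d \<noteq> 0" and m: "m \<in> nonunits R"
  shows "d * m * inverse d \<in> nonunits R"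
proof -
  have mR: "m \<in> R" using m by (simp add: nonunits_def)
  have "d * m * inverse d \<in> R" by (rule conj_in[OF max ld a d mR])
  moreover have "d * m * inverse d = 0 \<or> inverse (d * m * inverse d) \<notin> R"
  proof (rule ccontr)
    assume "\<not> ?thesis"
    then have ne: "d * m * inverse d \<noteq> 0" and i: "inverse (d * m * inverse d) \<in> R" by auto
    then have m0: "m \<noteq> 0" by auto
    have "inverse (d * m * inverse d) = d * inverse m * inverse d"
      using d m0 by (simp add: nonzero_inverse_mult_distrib mult.assoc)
    moreover have "inverse d * (d * inverse m * inverse d) * d = (inverse d * d) * inverse m * (inverse d * d)"
      by (simp only: mult.assoc)
    ultimately have "inverse d * inverse (d * m * inverse d) * inverse (inverse d) = inverse m"
      using d by simp
    moreover have "inverse d * inverse (d * m * inverse d) * inverse (inverse d) \<in> R"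
      using d by (intro conj_in[OF max ld a _ i]) simp
    ultimately have "inverse m \<in> R" by simp
    then show False using m m0 by (simp add: nonunits_def)
  qed
  ultimately show ?thesis by (simp add: nonunits_def)
qed


definition polyS :: "'a::ring_1 set \<Rightarrow> 'a \<Rightarrow> nat \<Rightarrow> 'a set" where
  "polyS S d n = {x. \<exists>c. (\<forall>i. c i \<in> S) \<and> x = (\<Sum>i\<le>n. c i * d ^ i)}"

lemma polyS_I: "(\<forall>i. c i \<in> S) \<Longrightarrow> (\<Sum>i\<le>n. c i * d ^ i) \<in> polyS S d n"
  unfolding polyS_def by blast

lemma polyS_zero: "0 \<in> S \<Longrightarrow> 0 \<in> polyS S d n"
  using polyS_I[where c="\<lambda>i. 0" and S=S and n=n and d=d] by simp

lemma polyS_add: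
  assumes "\<forall>x\<in>S. \<forall>y\<in>S. x + y \<in> S" "x \<in> polyS S d n" "y \<in> polyS S d n"
  shows "x + y \<in> polyS S d n"
proof -
  obtain c e where c: "\<forall>i. c i \<in> S" "x = (\<Sum>i\<le>n. c i * d ^ i)"
    and e: "\<forall>i. e i \<in> S" "y = (\<Sum>i\<le>n. e i * d ^ i)" using assms(2,3) unfolding polyS_def by blast
  have "x + y = (\<Sum>i\<le>n. (c i + e i) * d ^ i)" using c e by (simp add: sum.distrib distrib_right)
  moreover have "\<forall>i. c i + e i \<in> S" using c e assms(1) by blast
  ultimately show ?thesis using polyS_I by metis
qed

lemma polyS_lmult:
  assumes "\<forall>m\<in>S. r * m \<in> S'" "x \<in> polyS S d n"
  shows "r * x \<in> polyS S' d n"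
proof -
  obtain c where c: "\<forall>i. c i \<in> S" "x = (\<Sum>i\<le>n. c i * d ^ i)" using assms(2) unfolding polyS_def by blast
  have "r * x = (\<Sum>i\<le>n. (r * c i) * d ^ i)" using c by (simp add: sum_distrib_left mult.assoc)
  moreover have "\<forall>i. r * c i \<in> S'" using c assms(1) by blast
  ultimately show ?thesis using polyS_I by metis
qed

lemma polyS_term:
  assumes "0 \<in> S" "m \<in> S" "i \<le> n"
  shows "m * d ^ i \<in> polyS S d n"
proof -
  have "(\<Sum>j\<le>n. (if j = i then m else 0) * d ^ j) = (\<Sum>j\<le>n. if j = i then m * d ^ j else 0)"
    by (rule sum.cong) auto
  also have "\<dots> = m * d ^ i" using assms(3) by (subst sum.delta) auto
  finally have eq: "(\<Sum>j\<le>n. (if j = i then m else 0) * d ^ j) = m * d ^ i" .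
  have "(\<Sum>j\<le>n. (if j = i then m else 0) * d ^ j) \<in> polyS S d n"
    by (rule polyS_I) (use assms in auto)
  then show ?thesis by (simp only: eq)
qed

lemma polyS_sum:
  assumes "0 \<in> S" "\<forall>x\<in>S. \<forall>y\<in>S. x + y \<in> S" "finite A" "\<forall>a\<in>A. f a \<in> polyS S d n"
  shows "sum f A \<in> polyS S d n"
  using assms(3,4)
proof (induction A rule: finite_induct)
  case empty then show ?case using polyS_zero[OF assms(1)] by simp
next
  case (insert a A) then show ?case using polyS_add[OF assms(2)] by simp
qed

lemma polyS_mono:
  assumes "0 \<in> S" "n \<le> m" "x \<in> polyS S d n"
  shows "x \<in> polyS S d m"
proof -
  obtain c where c: "\<forall>i. c i \<in> S" "x = (\<Sum>i\<le>n. c i * d ^ i)" using assms(3) unfolding polyS_def by blast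
  have "(\<Sum>i\<le>m. (if i \<in> {..n} then c i else 0) * d ^ i) = (\<Sum>i\<le>m. if i \<in> {..n} then c i * d ^ i else 0)"
    by (rule sum.cong) auto
  also have "\<dots> = (\<Sum>i\<in>{..m} \<inter> {..n}. c i * d ^ i)" by (rule sum.inter_restrict[symmetric]) simp
  also have "{..m} \<inter> {..n} = {..n}" using assms(2) by auto
  finally have eq: "(\<Sum>i\<le>m. (if i \<in> {..n} then c i else 0) * d ^ i) = x" using c by simp
  have "(\<Sum>i\<le>m. (if i \<in> {..n} then c i else 0) * d ^ i) \<in> polyS S d m"
    by (rule polyS_I) (use assms(1) c in auto)
  then show ?thesis by (simp only: eq)
qed

definition polyAll :: "'a::ring_1 set \<Rightarrow> 'a \<Rightarrow> 'a set" where
  "polyAll S d = {x. \<exists>n. x \<in> polyS S d n}"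

lemma polyAll_subring:
  fixes R :: "'a::ring_1 set"
  assumes sub: "subring R" and cm: "\<forall>t\<in>R. \<exists>t'\<in>R. d * t = t' * d"
  shows "subring (polyAll R d)"
proof -
  have z: "0 \<in> R" using sub_zero[OF sub] .
  have ad: "\<forall>x\<in>R. \<forall>y\<in>R. x + y \<in> R" using sub_add[OF sub] by blast
  have cmi: "\<forall>t\<in>R. \<exists>t'\<in>R. d ^ i * t = t' * d ^ i" for i using comm_pow[OF cm] .
  show ?thesis unfolding subring_def polyAll_def
  proof (intro conjI ballI)
    have "1 * d ^ 0 \<in> polyS R d 0" by (rule polyS_term[OF z sub_one[OF sub]]) simp
    then show "1 \<in> {x. \<exists>n. x \<in> polyS R d n}" by auto
  next
    fix x y assume "x \<in> {x. \<exists>n. x \<in> polyS R d n}" "y \<in> {x. \<exists>n. x \<in> polyS R d n}"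
    then obtain n m where xn: "x \<in> polyS R d n" and ym: "y \<in> polyS R d m" by blast
    have xn': "x \<in> polyS R d (n + m)" by (rule polyS_mono[OF z _ xn]) simp
    have ym': "y \<in> polyS R d (n + m)" by (rule polyS_mono[OF z _ ym]) simp
    have "(-1) * y \<in> polyS R d (n + m)"
      by (rule polyS_lmult[OF _ ym']) (use sub_uminus[OF sub] in simp)
    then have "x + (-1) * y \<in> polyS R d (n + m)" using polyS_add[OF ad xn'] by blast
    then show "x - y \<in> {x. \<exists>n. x \<in> polyS R d n}" by auto
    obtain c where c: "\<forall>i. c i \<in> R" "x = (\<Sum>i\<le>n. c i * d ^ i)" using xn unfolding polyS_def by blast
    obtain e where e: "\<forall>i. e i \<in> R" "y = (\<Sum>i\<le>m. e i * d ^ i)" using ym unfolding polyS_def by blast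
    have xy: "x * y = (\<Sum>i\<le>n. \<Sum>j\<le>m. c i * d ^ i * (e j * d ^ j))" unfolding c(2) e(2) by (rule sum_product)
    have "\<forall>i\<in>{..n}. \<forall>j\<in>{..m}. c i * d ^ i * (e j * d ^ j) \<in> polyS R d (n + m)"
    proof (intro ballI)
      fix i j assume i: "i \<in> {..n}" and j: "j \<in> {..m}"
      obtain t' where t': "t' \<in> R" "d ^ i * e j = t' * d ^ i" using cmi[of i] e(1) by blast
      have "c i * d ^ i * (e j * d ^ j) = c i * (d ^ i * e j) * d ^ j" by (simp only: mult.assoc)
      also have "\<dots> = c i * (t' * d ^ i) * d ^ j" by (simp only: t'(2))
      also have "\<dots> = (c i * t') * d ^ (i + j)" by (simp only: mult.assoc power_add)
      finally have "c i * d ^ i * (e j * d ^ j) = (c i * t') * d ^ (i + j)" .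
      moreover have "(c i * t') * d ^ (i + j) \<in> polyS R d (n + m)"
        using i j sub_mult[OF sub] c(1) t'(1) by (intro polyS_term[OF z]) auto
      ultimately show "c i * d ^ i * (e j * d ^ j) \<in> polyS R d (n + m)" by simp
    qed
    then have "\<forall>i\<in>{..n}. (\<Sum>j\<le>m. c i * d ^ i * (e j * d ^ j)) \<in> polyS R d (n + m)"
      by (intro ballI polyS_sum[OF z ad]) auto
    then have "(\<Sum>i\<le>n. \<Sum>j\<le>m. c i * d ^ i * (e j * d ^ j)) \<in> polyS R d (n + m)"
      by (intro polyS_sum[OF z ad]) auto
    then show "x * y \<in> {x. \<exists>n. x \<in> polyS R d n}" unfolding xy by blast
  qed
qed


definition goodM :: "'a::division_ring set \<Rightarrow> 'a set \<Rightarrow> bool" where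
  "goodM R M \<longleftrightarrow> subring R \<and> M \<subseteq> R \<and> 0 \<in> M \<and> (\<forall>x\<in>M. \<forall>y\<in>M. x + y \<in> M) \<and> 1 \<notin> M \<and>
     (\<forall>r\<in>R. \<forall>m\<in>M. r * m \<in> M) \<and> (\<forall>u\<in>R. u \<notin> M \<longrightarrow> (\<exists>w\<in>R. w * u = 1))"

lemma conj_pow:
  fixes d :: "'a::division_ring"
  assumes "\<forall>m\<in>M. d * m * inverse d \<in> M"
  shows "\<forall>m\<in>M. d ^ k * m * inverse d ^ k \<in> M"
proof (induction k)
  case 0 then show ?case by simp
next
  case (Suc k)
  show ?case
  proof
    fix m assume "m \<in> M"
    then have "d ^ k * m * inverse d ^ k \<in> M" using Suc by blast
    then have "d * (d ^ k * m * inverse d ^ k) * inverse d \<in> M" using assms by blast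
    moreover have "d * (d ^ k * m * inverse d ^ k) * inverse d = d ^ Suc k * m * inverse d ^ Suc k"
      by (simp only: power_Suc2[of "inverse d" k] power_Suc[of d k] mult.assoc)
    ultimately show "d ^ Suc k * m * inverse d ^ Suc k \<in> M" by simp
  qed
qed

lemma pow_inv_diff:
  fixes d :: "'a::division_ring"
  assumes "d \<noteq> 0" "j \<le> n"
  shows "d ^ n * inverse d ^ j = d ^ (n - j)"
proof -
  have "d ^ n = d ^ (n - j) * d ^ j" using assms(2) by (simp add: power_add[symmetric])
  moreover have "d ^ j * inverse d ^ j = 1" using assms(1) by (simp add: power_inverse)
  ultimately show ?thesis by (simp add: mult.assoc)
qed

lemma zero_case:
  assumes "goodM R M" shows "1 \<notin> polyS M d 0"
  using assms unfolding goodM_def polyS_def by (auto; metis)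

lemma normalize:
  fixes x :: "'a::division_ring"
  assumes g: "goodM R M" and x: "x \<noteq> 0" and one: "1 \<in> polyS M x (Suc k)"
  shows "inverse x \<in> polyS M x k"
proof -
  obtain e where e: "\<forall>i. e i \<in> M" "1 = (\<Sum>i\<le>Suc k. e i * x ^ i)" using one unfolding polyS_def by blast
  define y where "y = (\<Sum>i\<le>k. e (Suc i) * x ^ i)"
  have "(\<Sum>i\<le>Suc k. e i * x ^ i) = e 0 + (\<Sum>i\<le>k. e (Suc i) * x ^ Suc i)"
    by (subst sum.atMost_Suc_shift) simp
  also have "(\<Sum>i\<le>k. e (Suc i) * x ^ Suc i) = y * x"
    unfolding y_def by (simp add: sum_distrib_right mult.assoc power_commutes)
  finally have "1 = e 0 + y * x" using e by simp
  then have u: "1 - e 0 = y * x" by (simp add: algebra_simps)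
  have sub: "subring R" and MR: "M \<subseteq> R" using g unfolding goodM_def by auto
  have uR: "1 - e 0 \<in> R" using sub_diff[OF sub sub_one[OF sub]] MR e(1) by blast
  have uM: "1 - e 0 \<notin> M"
  proof
    assume "1 - e 0 \<in> M"
    then have "(1 - e 0) + e 0 \<in> M" using g e(1) unfolding goodM_def by blast
    then show False using g unfolding goodM_def by simp
  qed
  obtain w where w: "w \<in> R" "w * (1 - e 0) = 1" using g uR uM unfolding goodM_def by blast
  have "(w * y) * x = 1" using w u by (simp add: mult.assoc)
  then have "inverse (w * y) = x" by (rule inverse_unique)
  then have wy: "w * y = inverse x" by (metis inverse_inverse_eq)
  have "w * y \<in> polyS M x k" unfolding y_def
    by (rule polyS_lmult[OF _ polyS_I[where c="\<lambda>i. e (Suc i)" and S=M]]) (use g w e(1) in \<open>auto simp: goodM_def\<close>)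
  then show ?thesis using wy by simp
qed

lemma reduce:
  fixes d :: "'a::division_ring"
  assumes g: "goodM R M" and d: "d \<noteq> 0" and cj: "\<forall>m\<in>M. d * m * inverse d \<in> M"
    and one: "1 \<in> polyS M d (Suc n)" and dd: "d \<in> polyS M (inverse d) k" and kn: "k \<le> n"
  shows "1 \<in> polyS M d n"
proof -
  have z: "0 \<in> M" and ad: "\<forall>x\<in>M. \<forall>y\<in>M. x + y \<in> M" and MR: "M \<subseteq> R"
    and lm: "\<forall>r\<in>R. \<forall>m\<in>M. r * m \<in> M" using g unfolding goodM_def by auto
  obtain c where c: "\<forall>i. c i \<in> M" "1 = (\<Sum>i\<le>Suc n. c i * d ^ i)" using one unfolding polyS_def by blast
  obtain f where f: "\<forall>i. f i \<in> M" "d = (\<Sum>j\<le>k. f j * inverse d ^ j)" using dd unfolding polyS_def by blast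
  have cjn: "\<forall>m\<in>M. d ^ n * m * inverse d ^ n \<in> M" by (rule conj_pow[OF cj])
  have dn0: "d ^ n \<noteq> 0" using d by simp
  have tm: "d ^ n * (f j * inverse d ^ j) = (d ^ n * f j * inverse d ^ n) * d ^ (n - j)" if "j \<le> k" for j
  proof -
    have "inverse d ^ n * d ^ n = 1" using dn0 by (simp add: power_inverse)
    then have "(d ^ n * f j * inverse d ^ n) * (d ^ n * inverse d ^ j) = d ^ n * (f j * inverse d ^ j)"
      by (metis mult.assoc mult_1_left)
    moreover have "d ^ n * inverse d ^ j = d ^ (n - j)" using pow_inv_diff[OF d] that kn by simp
    ultimately show ?thesis by simp
  qed
  have "d ^ Suc n = d ^ n * d" by (rule power_Suc2)
  also have "\<dots> = d ^ n * (\<Sum>j\<le>k. f j * inverse d ^ j)" using f(2) by (rule arg_cong[where f="(*) (d ^ n)"])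
  also have "\<dots> = (\<Sum>j\<le>k. d ^ n * (f j * inverse d ^ j))" by (rule sum_distrib_left)
  also have "\<dots> = (\<Sum>j\<le>k. (d ^ n * f j * inverse d ^ n) * d ^ (n - j))" using tm by (intro sum.cong) auto
  finally have dsn: "d ^ Suc n = (\<Sum>j\<le>k. (d ^ n * f j * inverse d ^ n) * d ^ (n - j))" .
  have "c (Suc n) * d ^ Suc n = (\<Sum>j\<le>k. (c (Suc n) * (d ^ n * f j * inverse d ^ n)) * d ^ (n - j))"
    unfolding dsn by (simp add: sum_distrib_left mult.assoc)
  moreover have "(\<Sum>j\<le>k. (c (Suc n) * (d ^ n * f j * inverse d ^ n)) * d ^ (n - j)) \<in> polyS M d n"
  proof (intro polyS_sum[OF z ad] ballI)
    fix j assume "j \<in> {..k}"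
    have "d ^ n * f j * inverse d ^ n \<in> M" using cjn f(1) by blast
    then have "c (Suc n) * (d ^ n * f j * inverse d ^ n) \<in> M" using lm MR c(1) by blast
    then show "(c (Suc n) * (d ^ n * f j * inverse d ^ n)) * d ^ (n - j) \<in> polyS M d n"
      by (rule polyS_term[OF z]) simp
  qed simp
  ultimately have p2: "c (Suc n) * d ^ Suc n \<in> polyS M d n" by simp
  have p1: "(\<Sum>i\<le>n. c i * d ^ i) \<in> polyS M d n" by (rule polyS_I) (use c in simp)
  have "1 = (\<Sum>i\<le>n. c i * d ^ i) + c (Suc n) * d ^ Suc n" using c(2) by simp
  then show ?thesis using polyS_add[OF ad p1 p2] by simp
qed

lemma poly_contra:
  fixes d :: "'a::division_ring"
  assumes g: "goodM R M"
  shows "d \<noteq> 0 \<Longrightarrow> \<forall>m\<in>M. d * m * inverse d \<in> M \<Longrightarrow> \<forall>m\<in>M. inverse d * m * d \<in> M \<Longrightarrow>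
    1 \<in> polyS M d n \<Longrightarrow> 1 \<in> polyS M (inverse d) k \<Longrightarrow> False"
proof (induction "n + k" arbitrary: d n k rule: less_induct)
  case less
  show False
  proof (cases n)
    case 0 then show False using zero_case[OF g] less.prems by simp
  next
    case (Suc n')
    show False
    proof (cases k)
      case 0 then show False using zero_case[OF g] less.prems by simp
    next
      case (Suc k')
      have di: "inverse d \<noteq> 0" using less.prems by simp
      show False
      proof (cases "k \<le> n")
        case True
        have "inverse (inverse d) \<in> polyS M (inverse d) k'"
          using normalize[OF g di] less.prems Suc by simp
        then have dd: "d \<in> polyS M (inverse d) k'" by simp
        have "1 \<in> polyS M d n'"
          using reduce[OF g less.prems(1,2) _ dd] less.prems(4) \<open>n = Suc n'\<close> True Suc by simp
        then show False using less.hyps[of n' k d] less.prems \<open>n = Suc n'\<close> by simp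
      next
        case False
        have dd: "inverse d \<in> polyS M d n'"
          using normalize[OF g less.prems(1)] less.prems(4) \<open>n = Suc n'\<close> by simp
        have cj': "\<forall>m\<in>M. inverse d * m * inverse (inverse d) \<in> M" using less.prems(3) by simp
        have "1 \<in> polyS M (inverse d) k'"
          using reduce[OF g di cj' _ , of k' n'] less.prems(5) dd \<open>n = Suc n'\<close> False Suc by simp
        then show False using less.hyps[of k' n "inverse d"] less.prems Suc by simp
      qed
    qed
  qed
qed


lemma rd:
  fixes R :: "'a::division_ring set"
  assumes sub: "subring R" and h: "\<forall>x\<in>R. x \<noteq> 0 \<longrightarrow> (\<forall>r\<in>R. inverse x * r * x \<in> R)"
  shows "right_duo R"
  unfolding right_duo_def ideal_of_def
proof (intro allI impI conjI)
  fix I assume I: "right_ideal_of R I"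
  then show "right_ideal_of R I" .
  show "left_ideal_of R I" unfolding left_ideal_of_def
  proof (intro conjI ballI)
    show "I \<subseteq> R" "0 \<in> I" using I unfolding right_ideal_of_def by auto
  next
    fix x y assume "x \<in> I" "y \<in> I" then show "x - y \<in> I" using I unfolding right_ideal_of_def by auto
  next
    fix r x assume r: "r \<in> R" and x: "x \<in> I"
    show "r * x \<in> I"
    proof (cases "x = 0")
      case True then show ?thesis using I unfolding right_ideal_of_def by simp
    next
      case False
      have xR: "x \<in> R" using I x unfolding right_ideal_of_def by auto
      then have "inverse x * r * x \<in> R" using h False r by blast
      then have "x * (inverse x * r * x) \<in> I" using I x unfolding right_ideal_of_def by blast
      moreover have "x * (inverse x * r * x) = r * x" using False by (simp add: mult.assoc[symmetric])
      ultimately show ?thesis by simp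
    qed
  qed
qed

context
  fixes R :: "'a::division_ring set" and a :: 'a
  assumes max: "maximal_subring R" and ld: "left_duo R"
    and aR: "a \<in> R" and a0: "a \<noteq> 0" and ai: "inverse a \<notin> R"
begin

lemma sub: "subring R" using max by (simp add: maximal_subring_def)

lemma cj: "d \<noteq> 0 \<Longrightarrow> t \<in> R \<Longrightarrow> d * t * inverse d \<in> R"
  by (rule conj_in[OF max ld aR a0 ai])

lemma aN: "a \<in> nonunits R" using aR ai by (simp add: nonunits_def)

lemma one_nu: "1 \<notin> nonunits R" by (simp add: nonunits_def)

lemma nuR: "nonunits R \<subseteq> R" by (auto simp: nonunits_def)

lemma nu_unit: "u \<in> R \<Longrightarrow> u \<notin> nonunits R \<Longrightarrow> u \<noteq> 0 \<and> inverse u \<in> R"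
  by (auto simp: nonunits_def)

lemma good: "goodM R (nonunits R)"
  unfolding goodM_def
proof (intro conjI ballI impI)
  show "subring R" by (rule sub)
  show "nonunits R \<subseteq> R" by (rule nuR)
  show "0 \<in> nonunits R" using sub_zero[OF sub] by (simp add: nonunits_def)
  show "1 \<notin> nonunits R" by (rule one_nu)
next
  fix x y assume "x \<in> nonunits R" "y \<in> nonunits R"
  then show "x + y \<in> nonunits R" by (rule nu_add[OF max ld])
next
  fix r m assume "r \<in> R" "m \<in> nonunits R"
  then show "r * m \<in> nonunits R" by (rule nu_multL[OF sub])
next
  fix u assume "u \<in> R" "u \<notin> nonunits R"
  then have "u \<noteq> 0" "inverse u \<in> R" using nu_unit by auto
  then show "\<exists>w\<in>R. w * u = 1" by (intro bexI[of _ "inverse u"]) auto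
qed

lemma ccL: "d \<noteq> 0 \<Longrightarrow> m \<in> nonunits R \<Longrightarrow> d * m * inverse d \<in> nonunits R"
  by (rule nu_conj[OF max ld aR a0 ai])

lemma ccR: "d \<noteq> 0 \<Longrightarrow> m \<in> nonunits R \<Longrightarrow> inverse d * m * d \<in> nonunits R"
  using ccL[of "inverse d" m] by simp

lemma get_one:
  assumes y0: "y \<noteq> 0" and yR: "y \<notin> R"
  shows "\<exists>n. 1 \<in> polyS (nonunits R) y n"
proof -
  have cm: "\<forall>t\<in>R. \<exists>t'\<in>R. y * t = t' * y"
  proof
    fix t assume "t \<in> R"
    then have "y * t * inverse y \<in> R" using cj y0 by blast
    moreover have "y * t = (y * t * inverse y) * y" using y0 by (simp add: mult.assoc)
    ultimately show "\<exists>t'\<in>R. y * t = t' * y" by blast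
  qed
  have ps: "subring (polyAll R y)" by (rule polyAll_subring[OF sub cm])
  have "R \<subseteq> polyAll R y"
  proof
    fix t assume "t \<in> R"
    then have "t * y ^ 0 \<in> polyS R y 0" by (intro polyS_term[OF sub_zero[OF sub]]) auto
    then show "t \<in> polyAll R y" unfolding polyAll_def by auto
  qed
  moreover have "y \<in> polyAll R y"
  proof -
    have "1 * y ^ 1 \<in> polyS R y 1" by (intro polyS_term[OF sub_zero[OF sub] sub_one[OF sub]]) auto
    then show ?thesis unfolding polyAll_def by auto
  qed
  ultimately have "polyAll R y = UNIV" using max_sub[OF max ps] yR by blast
  then obtain n where n: "inverse a \<in> polyS R y n" unfolding polyAll_def by blast
  have "a * inverse a \<in> polyS (nonunits R) y n"
    by (rule polyS_lmult[OF _ n]) (use nu_multR[OF sub _ aN] in blast)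
  then show ?thesis using a0 by auto
qed

lemma valuation: "valuation_ring_for R"
  unfolding valuation_ring_for_def
proof (intro allI impI)
  fix x :: 'a assume x0: "x \<noteq> 0"
  show "x \<in> R \<or> inverse x \<in> R"
  proof (rule ccontr)
    assume "\<not> ?thesis"
    then have xR: "x \<notin> R" and xiR: "inverse x \<notin> R" by auto
    obtain n where n: "1 \<in> polyS (nonunits R) x n" using get_one[OF x0 xR] by blast
    obtain k where k: "1 \<in> polyS (nonunits R) (inverse x) k" using get_one[OF _ xiR] x0 by auto
    show False
      by (rule poly_contra[OF good x0 _ _ n k]) (use ccL ccR x0 in auto)
  qed
qed

lemma nu_left: "left_ideal_of R (nonunits R)"
  unfolding left_ideal_of_def
proof (intro conjI ballI)
  show "nonunits R \<subseteq> R" by (rule nuR)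
  show "0 \<in> nonunits R" using sub_zero[OF sub] by (simp add: nonunits_def)
next
  fix x y assume "x \<in> nonunits R" "y \<in> nonunits R"
  then show "x - y \<in> nonunits R"
    using nu_add[OF max ld] nu_uminus[OF sub] by (metis diff_conv_add_uminus)
next
  fix r x assume "r \<in> R" "x \<in> nonunits R" then show "r * x \<in> nonunits R" by (rule nu_multL[OF sub])
qed

lemma nu_right: "right_ideal_of R (nonunits R)"
  using nu_left nu_multR[OF sub] unfolding left_ideal_of_def right_ideal_of_def by blast

lemma nu_ideal: "ideal_of R (nonunits R)"
  using nu_left nu_right by (simp add: ideal_of_def)

lemma nu_ne: "nonunits R \<noteq> R" using one_nu sub_one[OF sub] by blast

lemma nu_nz: "nonunits R \<noteq> {0}" using aN a0 by blast

lemma left_in_nu: "left_ideal_of R I \<Longrightarrow> I \<noteq> R \<Longrightarrow> I \<subseteq> nonunits R"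
proof
  fix x assume I: "left_ideal_of R I" and IR: "I \<noteq> R" and x: "x \<in> I"
  show "x \<in> nonunits R"
  proof (rule ccontr)
    assume nx: "x \<notin> nonunits R"
    have xR: "x \<in> R" using I x unfolding left_ideal_of_def by auto
    then have x0: "x \<noteq> 0" and xi: "inverse x \<in> R" using nu_unit nx by auto
    have "R \<subseteq> I"
    proof
      fix r assume r: "r \<in> R"
      then have "(r * inverse x) * x \<in> I" using I x sub_mult[OF sub r xi] unfolding left_ideal_of_def by blast
      then show "r \<in> I" using x0 by (simp add: mult.assoc)
    qed
    then show False using I IR unfolding left_ideal_of_def by auto
  qed
qed

lemma right_in_nu: "right_ideal_of R I \<Longrightarrow> I \<noteq> R \<Longrightarrow> I \<subseteq> nonunits R"
proof
  fix x assume I: "right_ideal_of R I" and IR: "I \<noteq> R" and x: "x \<in> I"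
  show "x \<in> nonunits R"
  proof (rule ccontr)
    assume nx: "x \<notin> nonunits R"
    have xR: "x \<in> R" using I x unfolding right_ideal_of_def by auto
    then have x0: "x \<noteq> 0" and xi: "inverse x \<in> R" using nu_unit nx by auto
    have "R \<subseteq> I"
    proof
      fix r assume r: "r \<in> R"
      then have "x * (inverse x * r) \<in> I" using I x sub_mult[OF sub xi r] unfolding right_ideal_of_def by blast
      then show "r \<in> I" using x0 by (simp add: mult.assoc[symmetric])
    qed
    then show False using I IR unfolding right_ideal_of_def by auto
  qed
qed

lemma Max_l_eq: "Max_l R = {nonunits R}"
proof (intro set_eqI iffI)
  fix I assume "I \<in> Max_l R"
  then have I: "left_ideal_of R I" "I \<noteq> R" "\<forall>J. left_ideal_of R J \<and> J \<noteq> R \<and> I \<subseteq> J \<longrightarrow> J = I"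
    unfolding Max_l_def by auto
  then show "I \<in> {nonunits R}" using left_in_nu[OF I(1,2)] nu_left nu_ne by auto
next
  fix I assume "I \<in> {nonunits R}"
  then show "I \<in> Max_l R" unfolding Max_l_def using nu_left nu_ne left_in_nu by blast
qed

lemma Max_r_eq: "Max_r R = {nonunits R}"
proof (intro set_eqI iffI)
  fix I assume "I \<in> Max_r R"
  then have I: "right_ideal_of R I" "I \<noteq> R" "\<forall>J. right_ideal_of R J \<and> J \<noteq> R \<and> I \<subseteq> J \<longrightarrow> J = I"
    unfolding Max_r_def by auto
  then show "I \<in> {nonunits R}" using right_in_nu[OF I(1,2)] nu_right nu_ne by auto
next
  fix I assume "I \<in> {nonunits R}"
  then show "I \<in> Max_r R" unfolding Max_r_def using nu_right nu_ne right_in_nu by blast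
qed

lemma Max_two_eq: "Max_two R = {nonunits R}"
proof (intro set_eqI iffI)
  fix I assume "I \<in> Max_two R"
  then have I: "ideal_of R I" "I \<noteq> R" "\<forall>J. ideal_of R J \<and> J \<noteq> R \<and> I \<subseteq> J \<longrightarrow> J = I"
    unfolding Max_two_def by auto
  then show "I \<in> {nonunits R}" using left_in_nu[OF _ I(2)] I(1) nu_ideal nu_ne
    unfolding ideal_of_def by auto
next
  fix I assume "I \<in> {nonunits R}"
  then show "I \<in> Max_two R" unfolding Max_two_def ideal_of_def using nu_ideal nu_ne left_in_nu
    unfolding ideal_of_def by blast
qed

lemma nu_prime: "prime_ideal_of R (nonunits R)"
  unfolding prime_ideal_of_def
proof (intro conjI ballI impI nu_ideal nu_ne)
  fix x y assume x: "x \<in> R" and y: "y \<in> R" and h: "\<forall>r\<in>R. x * r * y \<in> nonunits R"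
  then have xy: "x * y \<in> nonunits R" using sub_one[OF sub] by (metis mult_1_right)
  show "x \<in> nonunits R \<or> y \<in> nonunits R"
  proof (rule ccontr)
    assume "\<not> ?thesis"
    then have "x \<noteq> 0" "inverse x \<in> R" "y \<noteq> 0" "inverse y \<in> R" using nu_unit x y by auto
    then have "x * y \<noteq> 0" "inverse (x * y) \<in> R"
      using sub_mult[OF sub] by (auto simp: nonzero_inverse_mult_distrib)
    then show False using xy by (simp add: nonunits_def)
  qed
qed

lemma pow_prime:
  assumes P: "prime_ideal_of R P" and x: "x \<in> R" and x0: "x \<noteq> 0"
  shows "x ^ Suc k \<in> P \<Longrightarrow> x \<in> P"
proof (induction k)
  case 0 then show ?case by simp
next
  case (Suc k)
  have PI: "left_ideal_of R P" using P unfolding prime_ideal_of_def ideal_of_def by auto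
  have "\<forall>r\<in>R. x * r * x ^ Suc k \<in> P"
  proof
    fix r assume r: "r \<in> R"
    have r': "x * r * inverse x \<in> R" using cj x0 r by blast
    have "(x * r * inverse x) * x ^ Suc (Suc k) = x * r * (inverse x * x) * x ^ Suc k"
      by (simp only: power_Suc[of x "Suc k"] mult.assoc)
    then have "x * r * x ^ Suc k = (x * r * inverse x) * x ^ Suc (Suc k)"
      using x0 by simp
    then show "x * r * x ^ Suc k \<in> P" using PI Suc.prems r' unfolding left_ideal_of_def by simp
  qed
  then have "x \<in> P \<or> x ^ Suc k \<in> P" using P x sub_pow[OF sub x] unfolding prime_ideal_of_def by blast
  then show ?case using Suc.IH by blast
qed

lemma prime_eq:
  assumes P: "prime_ideal_of R P" and P0: "P \<noteq> {0}"
  shows "P = nonunits R"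
proof
  have PI: "left_ideal_of R P" "P \<noteq> R" using P unfolding prime_ideal_of_def ideal_of_def by auto
  then show "P \<subseteq> nonunits R" by (rule left_in_nu)
  show "nonunits R \<subseteq> P"
  proof
    fix x assume xn: "x \<in> nonunits R"
    show "x \<in> P"
    proof (cases "x = 0")
      case True then show ?thesis using PI unfolding left_ideal_of_def by simp
    next
      case False
      have x: "x \<in> R" "inverse x \<notin> R" using xn False by (auto simp: nonunits_def)
      obtain p where p: "p \<in> P" "p \<noteq> 0" using P0 PI unfolding left_ideal_of_def by blast
      obtain n where n: "x ^ n * inverse p \<in> R" using loc_univ[OF max ld x(1) False x(2)] by blast
      have "(x ^ n * inverse p) * p \<in> P" using PI n p unfolding left_ideal_of_def by blast
      then have xn: "x ^ n \<in> P" using p(2) by (simp add: mult.assoc)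
      show ?thesis
      proof (cases n)
        case 0
        then have "1 \<in> P" using xn by simp
        then have "R \<subseteq> P" using PI unfolding left_ideal_of_def by (metis mult_1_right subsetI)
        then show ?thesis using PI unfolding left_ideal_of_def by auto
      next
        case (Suc k) then show ?thesis using pow_prime[OF P x(1) False] xn by simp
      qed
    qed
  qed
qed

lemma primes_eq: "{P. prime_ideal_of R P \<and> P \<noteq> {0}} = {nonunits R}"
  using prime_eq nu_prime nu_nz by blast

end


lemma img_eq:
  fixes d :: "'a::division_ring"
  assumes d: "d \<noteq> 0" and h1: "\<And>t. t \<in> S \<Longrightarrow> d * t * inverse d \<in> S"
    and h2: "\<And>t. t \<in> S \<Longrightarrow> inverse d * t * d \<in> S"
  shows "(\<lambda>x. d * x * inverse d) ` S = S"
proof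
  show "(\<lambda>x. d * x * inverse d) ` S \<subseteq> S" using h1 by blast
  show "S \<subseteq> (\<lambda>x. d * x * inverse d) ` S"
  proof
    fix t assume t: "t \<in> S"
    have "d * (inverse d * t * d) * inverse d = (d * inverse d) * t * (d * inverse d)" by (simp only: mult.assoc)
    then have "d * (inverse d * t * d) * inverse d = t" using d by simp
    then show "t \<in> (\<lambda>x. d * x * inverse d) ` S" using h2[OF t] by (metis image_eqI)
  qed
qed

theorem proposition3p2:
  fixes R :: "'a::division_ring set"
  assumes "maximal_subring R" and "left_duo R"
  defines "M \<equiv> R - units_of_sub R"
  shows "duo R \<and>
    (is_division_subring R \<or>
      (Ore_domain R \<and> G_domain R \<and> {P. prime_ideal_of R P \<and> P \<noteq> {0}} = {M})) \<and>
    (\<not> is_division_subring R \<longrightarrow>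
      valuation_ring_for R \<and>
      Max_l R = Max_r R \<and> Max_r R = Max_two R \<and> Max_two R = Spec_sub R - {{0}} \<and>
      Spec_sub R - {{0}} = {M} \<and>
      (\<forall>d. d \<noteq> 0 \<longrightarrow> (\<lambda>x. d * x * inverse d) ` R = R \<and> (\<lambda>x. d * x * inverse d) ` M = M))"
proof -
  have sub: "subring R" using assms(1) by (simp add: maximal_subring_def)
  have Mn: "M = nonunits R" unfolding assms(3) units_eq nonunits_def by auto
  show ?thesis
  proof (cases "is_division_subring R")
    case True
    have "right_duo R"
      by (rule rd[OF sub]) (use True sub_mult[OF sub] in \<open>auto simp: is_division_subring_def\<close>)
    then have "duo R" using assms(2) by (simp add: duo_def)
    then show ?thesis using True by simp
  next
    case False
    then obtain a where a: "a \<in> R" "a \<noteq> 0" "inverse a \<notin> R"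
      using sub unfolding is_division_subring_def by blast
    note ctx = assms(1,2) a
    have "right_duo R"
    proof (rule rd[OF sub], intro ballI impI)
      fix x r assume "x \<in> R" "x \<noteq> 0" "r \<in> R"
      then show "inverse x * r * x \<in> R" using cj[OF ctx, of "inverse x" r] by simp
    qed
    then have duo: "duo R" using assms(2) by (simp add: duo_def)
    have val: "valuation_ring_for R" by (rule valuation[OF ctx])
    have dom: "domain_sub R" unfolding domain_sub_def using sub by simp
    have lo: "left_Ore R" unfolding left_Ore_def
    proof (intro ballI impI)
      fix x y assume x: "x \<in> R" and y: "y \<in> R" and xy: "x \<noteq> 0 \<and> y \<noteq> 0"
      then have "x * inverse y \<noteq> 0" by simp
      then have "x * inverse y \<in> R \<or> inverse (x * inverse y) \<in> R" using val unfolding valuation_ring_for_def by blast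
      then show "\<exists>r\<in>R. \<exists>s\<in>R. r * x = s * y \<and> r * x \<noteq> 0"
      proof
        assume h: "x * inverse y \<in> R"
        have "1 * x = (x * inverse y) * y" using xy by (simp add: mult.assoc)
        then show ?thesis using h sub_one[OF sub] xy by (intro bexI[of _ 1] bexI[of _ "x * inverse y"]) auto
      next
        assume "inverse (x * inverse y) \<in> R"
        then have h: "y * inverse x \<in> R" using xy by (simp add: nonzero_inverse_mult_distrib)
        have "(y * inverse x) * x = 1 * y" using xy by (simp add: mult.assoc)
        then show ?thesis using h sub_one[OF sub] xy by (metis mult_1_left)
      qed
    qed
    have ro: "right_Ore R" unfolding right_Ore_def
    proof (intro ballI impI)
      fix x y assume x: "x \<in> R" and y: "y \<in> R" and xy: "x \<noteq> 0 \<and> y \<noteq> 0"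
      then have "inverse x * y \<noteq> 0" by simp
      then have "inverse x * y \<in> R \<or> inverse (inverse x * y) \<in> R" using val unfolding valuation_ring_for_def by blast
      then show "\<exists>r\<in>R. \<exists>s\<in>R. x * r = y * s \<and> x * r \<noteq> 0"
      proof
        assume h: "inverse x * y \<in> R"
        have "x * (inverse x * y) = y * 1" using xy by (simp add: mult.assoc[symmetric])
        then show ?thesis using h sub_one[OF sub] xy by (metis mult_1_right)
      next
        assume "inverse (inverse x * y) \<in> R"
        then have h: "inverse y * x \<in> R" using xy by (simp add: nonzero_inverse_mult_distrib)
        have "x * 1 = y * (inverse y * x)" using xy by (simp add: mult.assoc[symmetric])
        then show ?thesis using h sub_one[OF sub] xy by (intro bexI[of _ 1] bexI[of _ "inverse y * x"]) auto
      qed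
    qed
    have pe: "{P. prime_ideal_of R P \<and> P \<noteq> {0}} = {M}" using primes_eq[OF ctx] Mn by simp
    have "R \<inter> \<Inter>{P. prime_ideal_of R P \<and> P \<noteq> {0}} = nonunits R"
      unfolding pe Mn using nuR[OF ctx] by blast
    then have gd: "G_domain R" unfolding G_domain_def using dom nu_nz[OF ctx] by simp
    have "Spec_sub R - {{0}} = {P. prime_ideal_of R P \<and> P \<noteq> {0}}" unfolding Spec_sub_def by blast
    then have sp: "Spec_sub R - {{0}} = {M}" using pe by simp
    have mx: "Max_l R = {M}" "Max_r R = {M}" "Max_two R = {M}"
      unfolding Mn by (rule Max_l_eq[OF ctx], rule Max_r_eq[OF ctx], rule Max_two_eq[OF ctx])
    have cjs: "(\<lambda>x. d * x * inverse d) ` R = R \<and> (\<lambda>x. d * x * inverse d) ` M = M" if d: "d \<noteq> 0" for d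
    proof
      show "(\<lambda>x. d * x * inverse d) ` R = R"
        by (rule img_eq[OF d]) (use cj[OF ctx d] cj[OF ctx, of "inverse d"] d in auto)
      show "(\<lambda>x. d * x * inverse d) ` M = M" unfolding Mn
        by (rule img_eq[OF d]) (use ccL[OF ctx d] ccR[OF ctx d] in auto)
    qed
    have od: "Ore_domain R" using dom lo ro by (simp add: Ore_domain_def)
    have "Max_l R = Max_r R" "Max_r R = Max_two R" "Max_two R = Spec_sub R - {{0}}" using mx sp by simp_all
    then show ?thesis using duo od gd pe val sp cjs by blast
  qed
qed

end
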